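(* Let $\theta=(\gamma,\mu,\sigma)\in\mathbb{R}\times\mathbb{R}\times(0,\infty)$ and $x\in\mathbb{R}$ with $1+\gamma z>0$, where $z=(x-\mu)/\sigma$, and let $u=u_\gamma(z)$. Then \[|\partial_\mu\ell_\theta(x)|\le\begin{cases}\sigma^{-1}(1+|\gamma|)\,u^{1+\gamma}&\text{if }z\le0,\\ \sigma^{-1}(1+|\gamma|)\,u^{\gamma}&\text{if }z\ge0.\end{cases}\]
   Context: $u_\gamma(z)=(1+\gamma z)^{-1/\gamma}$ for $\gamma\ne0$ and $e^{-z}$ for $\gamma=0$. $\ell_\theta(x)=\log p_\theta(x)=-\log\sigma-u+(\gamma+1)\log u$ is the GEV log-density on $\{1+\gamma z>0\}$ (the GEV density being $p_\theta(x)=\sigma^{-1}e^{-u}u^{\gamma+1}\mathbf 1(1+\gamma z>0)$); its partial derivative in $\mu$ is $\partial_\mu\ell_\theta(x)=\frac{\gamma+1-u}{\sigma(1+\gamma z)}$. *)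

theory Defs
  imports "HOL-Analysis.Analysis"
begin

definition gev_u :: "real \<Rightarrow> real \<Rightarrow> real" where
  "gev_u \<gamma> z = (if \<gamma> = 0 then exp (- z) else (1 + \<gamma> * z) powr (- 1 / \<gamma>))"

definition gev_loglik :: "real \<Rightarrow> real \<Rightarrow> real \<Rightarrow> real \<Rightarrow> real" where
  "gev_loglik \<gamma> \<mu> \<sigma> x =
     (let u = gev_u \<gamma> ((x - \<mu>) / \<sigma>) in - ln \<sigma> - u + (\<gamma> + 1) * ln u)"

end

theory Submission imports Defs begin
lemma alg: "T > 0 \<Longrightarrow> (P::real) > 0 \<Longrightarrow> \<sigma> > 0 \<Longrightarrow>
  P / T * (g+1) / (P * \<sigma>) - P / T / \<sigma> = (g+1-P)/(\<sigma>*T)"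
  by (simp add: field_simps)

lemma deriv_ne:
  fixes \<gamma> \<mu> \<sigma> x :: real
  assumes s: "\<sigma> > 0" and g: "\<gamma> \<noteq> 0"
    and t: "1 + \<gamma> * ((x - \<mu>) / \<sigma>) > 0"
  shows "((\<lambda>m. gev_loglik \<gamma> m \<sigma> x) has_real_derivative
     (\<gamma> + 1 - gev_u \<gamma> ((x - \<mu>) / \<sigma>)) / (\<sigma> * (1 + \<gamma> * ((x - \<mu>) / \<sigma>)))) (at \<mu>)"
proof -
  have eq: "(\<lambda>m. gev_loglik \<gamma> m \<sigma> x) = (\<lambda>m. - ln \<sigma> - (1 + \<gamma> * ((x - m) / \<sigma>)) powr (-1/\<gamma>)
       + (\<gamma> + 1) * ln ((1 + \<gamma> * ((x - m) / \<sigma>)) powr (-1/\<gamma>)))"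
    by (auto simp: gev_loglik_def gev_u_def g)
  show ?thesis unfolding eq gev_u_def using g s t
    apply (simp only: if_False)
    apply (rule derivative_eq_intros refl | simp)+
    apply (simp only: powr_diff)
    apply (subgoal_tac "0 < (1 + \<gamma> * (x - \<mu>) / \<sigma>) powr - (1 / \<gamma>)")
    apply (subst (1 2) powr_one, simp, simp)
    apply (simp add: diff_divide_distrib mult.commute)
    apply simp
    done
qed

lemma deriv_0:
  fixes \<mu> \<sigma> x :: real
  assumes s: "\<sigma> > 0"
  shows "((\<lambda>m. gev_loglik 0 m \<sigma> x) has_real_derivative
     (0 + 1 - gev_u 0 ((x - \<mu>) / \<sigma>)) / (\<sigma> * (1 + 0 * ((x - \<mu>) / \<sigma>)))) (at \<mu>)"
proof -
  have eq: "(\<lambda>m. gev_loglik 0 m \<sigma> x) = (\<lambda>m. - ln \<sigma> - exp (- ((x - m) / \<sigma>)) + (- ((x - m) / \<sigma>)))"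
    by (auto simp: gev_loglik_def gev_u_def)
  show ?thesis unfolding eq gev_u_def using s
    apply simp
    apply (rule derivative_eq_intros refl | simp)+
    apply (simp add: diff_divide_distrib)
    done
qed

lemma u_facts:
  fixes \<gamma> z :: real
  assumes t: "1 + \<gamma> * z > 0"
  shows "gev_u \<gamma> z > 0" "gev_u \<gamma> z powr \<gamma> = 1 / (1 + \<gamma> * z)"
    "z \<le> 0 \<Longrightarrow> gev_u \<gamma> z \<ge> 1" "z \<ge> 0 \<Longrightarrow> gev_u \<gamma> z \<le> 1"
proof -
  show "gev_u \<gamma> z > 0" using t by (simp add: gev_u_def)
  show "gev_u \<gamma> z powr \<gamma> = 1 / (1 + \<gamma> * z)"
  proof (cases "\<gamma> = 0")
    case True then show ?thesis by (simp add: gev_u_def)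
  next
    case False
    have "((1 + \<gamma> * z) powr (-1/\<gamma>)) powr \<gamma> = (1 + \<gamma> * z) powr (-1)"
      using False t by (simp add: powr_powr)
    then show ?thesis using False t by (simp add: gev_u_def powr_minus_divide)
  qed
  have key: "gev_u \<gamma> z = exp (- z)" if "\<gamma> = 0" using that by (simp add: gev_u_def)
  have key2: "gev_u \<gamma> z = exp (- ln (1 + \<gamma> * z) / \<gamma>)" if "\<gamma> \<noteq> 0"
    using that t by (simp add: gev_u_def powr_def)
  show "z \<le> 0 \<Longrightarrow> gev_u \<gamma> z \<ge> 1"
  proof (cases "\<gamma> = 0")
    case True then show "z \<le> 0 \<Longrightarrow> gev_u \<gamma> z \<ge> 1" using key by simp
  next
    case False
    assume z: "z \<le> 0"
    have "ln (1 + \<gamma> * z) / \<gamma> \<le> 0"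
    proof (cases "\<gamma> > 0")
      case True
      have "\<gamma> * z \<le> 0" using True z by (simp add: mult_nonneg_nonpos)
      then have "ln (1 + \<gamma> * z) \<le> 0" using t by simp
      then show ?thesis using True by (simp add: divide_nonpos_pos)
    next
      case False': False
      then have g: "\<gamma> < 0" using False by simp
      have "\<gamma> * z \<ge> 0" using g z by (simp add: mult_nonpos_nonpos)
      then have "ln (1 + \<gamma> * z) \<ge> 0" using t by simp
      then show ?thesis using g by (simp add: divide_nonneg_neg)
    qed
    then show ?thesis using key2 False by simp
  qed
  show "z \<ge> 0 \<Longrightarrow> gev_u \<gamma> z \<le> 1"
  proof (cases "\<gamma> = 0")
    case True then show "z \<ge> 0 \<Longrightarrow> gev_u \<gamma> z \<le> 1" using key by simp
  next
    case False
    assume z: "z \<ge> 0"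
    have "ln (1 + \<gamma> * z) / \<gamma> \<ge> 0"
    proof (cases "\<gamma> > 0")
      case True
      have "\<gamma> * z \<ge> 0" using True z by simp
      then have "ln (1 + \<gamma> * z) \<ge> 0" using t by simp
      then show ?thesis using True by simp
    next
      case False': False
      then have g: "\<gamma> < 0" using False by simp
      have "\<gamma> * z \<le> 0" using g z by (simp add: mult_nonpos_nonneg)
      then have "ln (1 + \<gamma> * z) \<le> 0" using t by simp
      then show ?thesis using g by (simp add: divide_nonpos_neg)
    qed
    then show ?thesis using key2 False by simp
  qed
qed

theorem lemmaB2:
  fixes \<gamma> \<mu> \<sigma> x :: real
  assumes "\<sigma> > 0"
    and "1 + \<gamma> * ((x - \<mu>) / \<sigma>) > 0"
  shows "let z = (x - \<mu>) / \<sigma>; u = gev_u \<gamma> z;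
             d = deriv (\<lambda>m. gev_loglik \<gamma> m \<sigma> x) \<mu> in
           (z \<le> 0 \<longrightarrow> \<bar>d\<bar> \<le> (1 + \<bar>\<gamma>\<bar>) * u powr (1 + \<gamma>) / \<sigma>) \<and>
           (z \<ge> 0 \<longrightarrow> \<bar>d\<bar> \<le> (1 + \<bar>\<gamma>\<bar>) * u powr \<gamma> / \<sigma>)"
proof -
  define z where "z = (x - \<mu>) / \<sigma>"
  define u where "u = gev_u \<gamma> z"
  have s: "\<sigma> > 0" and t: "1 + \<gamma> * z > 0" using assms z_def by auto
  have D: "((\<lambda>m. gev_loglik \<gamma> m \<sigma> x) has_real_derivative (\<gamma> + 1 - u) / (\<sigma> * (1 + \<gamma> * z))) (at \<mu>)"
    using deriv_ne[OF s _ assms(2)] deriv_0[OF s] unfolding u_def z_def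
    by (cases "\<gamma> = 0") auto
  have d: "deriv (\<lambda>m. gev_loglik \<gamma> m \<sigma> x) \<mu> = (\<gamma> + 1 - u) * u powr \<gamma> / \<sigma>"
    using DERIV_imp_deriv[OF D] u_facts(2)[OF t] unfolding u_def by simp
  have up: "u > 0" using u_facts(1)[OF t] u_def by simp
  have pg: "u powr \<gamma> > 0" using up by simp
  have p1: "u powr (1 + \<gamma>) = u * u powr \<gamma>" using up by (simp add: powr_add)
  have A: "\<bar>\<gamma> + 1 - u\<bar> \<le> (1 + \<bar>\<gamma>\<bar>) * u" if "z \<le> 0"
  proof -
    have "u \<ge> 1" using u_facts(3)[OF t that] u_def by simp
    then have "\<bar>\<gamma>\<bar> * 1 \<le> \<bar>\<gamma>\<bar> * u" by (intro mult_left_mono) auto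
    then show ?thesis using \<open>u \<ge> 1\<close> by (auto simp: abs_le_iff algebra_simps)
  qed
  have B: "\<bar>\<gamma> + 1 - u\<bar> \<le> (1 + \<bar>\<gamma>\<bar>)" if "z \<ge> 0"
  proof -
    have "u \<le> 1" using u_facts(4)[OF t that] u_def by simp
    then show ?thesis using up by (auto simp: abs_if)
  qed
  have "z \<le> 0 \<longrightarrow> \<bar>(\<gamma> + 1 - u) * u powr \<gamma> / \<sigma>\<bar> \<le> (1 + \<bar>\<gamma>\<bar>) * u powr (1 + \<gamma>) / \<sigma>"
  proof
    assume z: "z \<le> 0"
    have "\<bar>\<gamma> + 1 - u\<bar> * u powr \<gamma> \<le> (1 + \<bar>\<gamma>\<bar>) * u * u powr \<gamma>"
      using A[OF z] pg by (simp add: mult_right_mono)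
    then show "\<bar>(\<gamma> + 1 - u) * u powr \<gamma> / \<sigma>\<bar> \<le> (1 + \<bar>\<gamma>\<bar>) * u powr (1 + \<gamma>) / \<sigma>"
      using s pg by (simp add: p1 abs_mult divide_right_mono mult.assoc)
  qed
  moreover have "z \<ge> 0 \<longrightarrow> \<bar>(\<gamma> + 1 - u) * u powr \<gamma> / \<sigma>\<bar> \<le> (1 + \<bar>\<gamma>\<bar>) * u powr \<gamma> / \<sigma>"
  proof
    assume z: "z \<ge> 0"
    have "\<bar>\<gamma> + 1 - u\<bar> * u powr \<gamma> \<le> (1 + \<bar>\<gamma>\<bar>) * u powr \<gamma>"
      using B[OF z] pg by (simp add: mult_right_mono)
    then show "\<bar>(\<gamma> + 1 - u) * u powr \<gamma> / \<sigma>\<bar> \<le> (1 + \<bar>\<gamma>\<bar>) * u powr \<gamma> / \<sigma>"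
      using s pg by (simp add: abs_mult divide_right_mono)
  qed
  ultimately show ?thesis unfolding Let_def d[symmetric] z_def[symmetric] u_def[symmetric] by simp
qed
end
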